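(* Let $m,n\ge1$. There is no smooth function $u$ on all of $S^m\times S^n$ for which the hypersurface $\vec X(S^m\times S^n)\subset S^{m+n+1}$, where $\vec X(\vec\gamma,\vec\rho)=(1+e^{-2u})^{-1/2}\vec\gamma+(1+e^{2u})^{-1/2}\vec\rho$, is strictly convex.
   Context: $S^m\subset\mathbb R^{m+1}$, $S^n\subset\mathbb R^{n+1}$, $S^{m+n+1}\subset\mathbb R^{m+1}\oplus\mathbb R^{n+1}$ are unit spheres, $\vec\gamma,\vec\rho$ the position vectors of $S^m,S^n$. A hypersurface of $S^{m+n+1}$ is strictly convex if its second fundamental form (as a hypersurface of $S^{m+n+1}$) is positive or negative definite. *)

theory Defs
  imports "HOL-Analysis.Analysis"
begin

fun dirderivs :: "'a::real_normed_vector list \<Rightarrow> ('a \<Rightarrow> 'b::real_normed_vector) \<Rightarrow> 'a \<Rightarrow> 'b" where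
  "dirderivs [] f = f"
| "dirderivs (v # vs) f = (\<lambda>x. vector_derivative (\<lambda>t. dirderivs vs f (x + t *\<^sub>R v)) (at 0))"

definition smooth_on :: "'a::euclidean_space set \<Rightarrow> ('a \<Rightarrow> 'b::real_normed_vector) \<Rightarrow> bool" where
  "smooth_on U f \<longleftrightarrow> open U \<and>
     (\<forall>vs. \<forall>x\<in>U. continuous (at x) (dirderivs vs f) \<and>
        (\<forall>v. (\<lambda>t. dirderivs vs f (x + t *\<^sub>R v)) differentiable (at 0)))"

definition smooth_on_set :: "'a::euclidean_space set \<Rightarrow> ('a \<Rightarrow> 'b::real_normed_vector) \<Rightarrow> bool" where
  "smooth_on_set S f \<longleftrightarrow> (\<exists>U g. S \<subseteq> U \<and> smooth_on U g \<and> (\<forall>x\<in>S. g x = f x))"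

definition sphere_prod :: "('a::euclidean_space \<times> 'b::euclidean_space) set" where
  "sphere_prod = sphere 0 1 \<times> sphere 0 1"

definition Xmap :: "('a::real_normed_vector \<times> 'b::real_normed_vector \<Rightarrow> real) \<Rightarrow> 'a \<times> 'b \<Rightarrow> 'a \<times> 'b" where
  "Xmap u p = ((1 + exp (-2 * u p)) powr (-1/2) *\<^sub>R fst p, (1 + exp (2 * u p)) powr (-1/2) *\<^sub>R snd p)"

definition smooth_curve_through :: "'a::euclidean_space set \<Rightarrow> 'a \<Rightarrow> (real \<Rightarrow> 'a) \<Rightarrow> bool" where
  "smooth_curve_through S p c \<longleftrightarrow> c 0 = p \<and>
     (\<exists>e>0. smooth_on {-e<..<e} c \<and> (\<forall>t\<in>{-e<..<e}. c t \<in> S))"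

text \<open>Strict convexity of the immersed hypersurface F(M) of the unit sphere of the ambient space:
  at every point p of M there is a unit normal nu of F(M) tangent to the sphere
  (nu orthogonal to F p and to dF_p(T_p M)) with respect to which the second fundamental form
  h_p(v,v) = < (F o c)''(0), nu >  (c any smooth curve in M with c(0)=p, c'(0)=v)
  is positive definite.  (Negative definiteness w.r.t. nu is positive definiteness w.r.t. -nu.)\<close>
definition strictly_convex_hypersurface :: "'a::euclidean_space set \<Rightarrow> ('a \<Rightarrow> 'a) \<Rightarrow> bool" where
  "strictly_convex_hypersurface M F \<longleftrightarrow>
     (\<forall>p\<in>M. \<exists>\<nu>. norm \<nu> = 1 \<and> \<nu> \<bullet> F p = 0 \<and>
        (\<forall>c. smooth_curve_through M p c \<longrightarrow> \<nu> \<bullet> vector_derivative (F \<circ> c) (at 0) = 0) \<and>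
        (\<forall>c. smooth_curve_through M p c \<and> vector_derivative c (at 0) \<noteq> 0 \<longrightarrow>
           \<nu> \<bullet> vector_derivative (\<lambda>t. vector_derivative (F \<circ> c) (at t)) (at 0) > 0))"

end

theory Submission
  imports Defs
begin


lemma mvt_bound:
  fixes \<phi> \<phi>' :: "real \<Rightarrow> real"
  assumes d: "\<And>t. t \<in> closed_segment 0 c \<Longrightarrow> (\<phi> has_real_derivative \<phi>' t) (at t)"
    and b: "\<And>t. t \<in> closed_segment 0 c \<Longrightarrow> \<bar>\<phi>' t - K\<bar> \<le> \<epsilon>"
  shows "\<bar>\<phi> c - \<phi> 0 - c * K\<bar> \<le> \<bar>c\<bar> * \<epsilon>"
proof -
  define \<psi> where "\<psi> t = \<phi> t - t * K" for t
  have d': "(\<psi> has_real_derivative (\<phi>' t - K)) (at t)" if "t \<in> closed_segment 0 c" for t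
    unfolding \<psi>_def using d[OF that] by (auto intro!: derivative_eq_intros)
  have cont: "continuous_on (closed_segment 0 c) \<psi>"
    using d' by (meson DERIV_continuous continuous_at_imp_continuous_on)
  consider "c = 0" | "0 < c" | "c < 0" by linarith
  then show ?thesis
  proof cases
    case 1 then show ?thesis by simp
  next
    case 2
    then have seg: "closed_segment 0 c = {0..c}" by (simp add: closed_segment_eq_real_ivl)
    from MVT[OF 2, of \<psi>] cont d' seg obtain l z where
      z: "0 < z" "z < c" "DERIV \<psi> z :> l" "\<psi> c - \<psi> 0 = (c - 0) * l"
      by (metis atLeastAtMost_iff less_imp_le real_differentiable_def)
    have l: "l = \<phi>' z - K" using DERIV_unique[OF z(3) d'] z seg by auto
    have "\<phi> c - \<phi> 0 - c * K = c * (\<phi>' z - K)" using z(4) unfolding l \<psi>_def by (simp add: algebra_simps)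
    then show ?thesis using z b[of z] seg 2 by (simp add: abs_mult mult_left_mono)
  next
    case 3
    then have seg: "closed_segment 0 c = {c..0}" by (simp add: closed_segment_eq_real_ivl)
    from MVT[OF 3, of \<psi>] cont d' seg obtain l z where
      z: "c < z" "z < 0" "DERIV \<psi> z :> l" "\<psi> 0 - \<psi> c = (0 - c) * l"
      by (metis atLeastAtMost_iff less_imp_le real_differentiable_def)
    have l: "l = \<phi>' z - K" using DERIV_unique[OF z(3) d'] z seg by auto
    have "\<phi> c - \<phi> 0 - c * K = c * (\<phi>' z - K)" using z(4) unfolding l \<psi>_def by (simp add: algebra_simps)
    then show ?thesis using z b[of z] seg 3 by (simp add: abs_mult mult_left_mono)
  qed
qed

lemma partials_frechet:
  fixes f :: "'a::euclidean_space \<Rightarrow> real"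
  assumes U: "open U" "x \<in> U"
    and D: "\<And>y b. y \<in> U \<Longrightarrow> b \<in> Basis \<Longrightarrow> ((\<lambda>t. f (y + t *\<^sub>R b)) has_real_derivative D b y) (at 0)"
    and C: "\<And>b. b \<in> Basis \<Longrightarrow> continuous (at x) (D b)"
  shows "(f has_derivative (\<lambda>h. \<Sum>b\<in>Basis. (h \<bullet> b) * D b x)) (at x)"
  unfolding has_derivative_at_alt
proof (intro conjI allI impI)
  show "bounded_linear (\<lambda>h. \<Sum>b\<in>Basis. (h \<bullet> b) * D b x)"
    by (intro bounded_linear_intros)
  fix e :: real assume e: "e > 0"
  define n where "n = real DIM('a)"
  have n: "n \<ge> 1" unfolding n_def using DIM_positive by (simp add: Suc_le_eq)
  define \<epsilon> where "\<epsilon> = e / n"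
  have \<epsilon>: "\<epsilon> > 0" using e n by (simp add: \<epsilon>_def)
  have "\<forall>\<^sub>F y in nhds x. \<forall>b\<in>Basis. dist (D b y) (D b x) < \<epsilon>"
  proof (rule eventually_ball_finite[OF finite_Basis], intro ballI)
    fix b :: 'a assume b: "b \<in> Basis"
    have "(D b \<longlongrightarrow> D b x) (nhds x)"
      using C[OF b] by (simp add: continuous_at tendsto_at_iff_tendsto_nhds)
    then show "\<forall>\<^sub>F y in nhds x. dist (D b y) (D b x) < \<epsilon>" using \<epsilon> by (rule tendstoD)
  qed
  then obtain \<delta> where \<delta>: "\<delta> > 0" "\<And>y. dist y x < \<delta> \<Longrightarrow> \<forall>b\<in>Basis. dist (D b y) (D b x) < \<epsilon>"
    unfolding eventually_nhds_metric by blast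
  obtain r where r: "r > 0" "ball x r \<subseteq> U" using U open_contains_ball by blast
  define d where "d = min r \<delta> / n"
  have d: "d > 0" using r \<delta> n by (simp add: d_def)
  show "\<exists>d>0. \<forall>y. norm (y - x) < d \<longrightarrow>
      norm (f y - f x - (\<Sum>b\<in>Basis. ((y - x) \<bullet> b) * D b x)) \<le> e * norm (y - x)"
  proof (intro exI[of _ d] conjI allI impI d)
    fix y assume y: "norm (y - x) < d"
    define h where "h = y - x"
    have sumB: "(\<Sum>b\<in>Basis. \<bar>h \<bullet> b\<bar>) \<le> n * norm h"
      using sum_bounded_above[of Basis "\<lambda>b. \<bar>h \<bullet> b\<bar>" "norm h"] Basis_le_norm
      by (auto simp: n_def)
    have nh: "n * norm h < min r \<delta>" using y n by (simp add: h_def d_def field_simps)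
    have main: "B \<subseteq> Basis \<Longrightarrow> \<bar>f (x + (\<Sum>b\<in>B. (h \<bullet> b) *\<^sub>R b)) - f x - (\<Sum>b\<in>B. (h \<bullet> b) * D b x)\<bar>
        \<le> real (card B) * (\<epsilon> * norm h)" if "finite B" for B
      using that
    proof (induction B rule: finite_induct)
      case empty then show ?case by simp
    next
      case (insert b B)
      define q where "q = x + (\<Sum>b\<in>B. (h \<bullet> b) *\<^sub>R b)"
      have bB: "b \<in> Basis" using insert by auto
      have IH: "\<bar>f q - f x - (\<Sum>b\<in>B. (h \<bullet> b) * D b x)\<bar> \<le> real (card B) * (\<epsilon> * norm h)"
        using insert by (simp add: q_def)
      have nq: "norm (q - x) \<le> (\<Sum>b\<in>B. \<bar>h \<bullet> b\<bar>)"
        unfolding q_def using norm_sum[of "\<lambda>b. (h \<bullet> b) *\<^sub>R b" B] insert.prems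
        by (auto intro!: order.trans[OF norm_sum] sum_mono simp: subset_iff)
      have sB2: "(\<Sum>b\<in>B. \<bar>h \<bullet> b\<bar>) + \<bar>h \<bullet> b\<bar> \<le> (\<Sum>b\<in>Basis. \<bar>h \<bullet> b\<bar>)"
        using sum_mono2[OF finite_Basis insert.prems, of "\<lambda>b. \<bar>h \<bullet> b\<bar>"] insert.hyps
        by (simp add: add.commute)
      have pt: "q + t *\<^sub>R b \<in> U \<and> dist (q + t *\<^sub>R b) x < \<delta>" if t: "t \<in> closed_segment 0 (h \<bullet> b)" for t
      proof -
        have "\<bar>t\<bar> \<le> \<bar>h \<bullet> b\<bar>" using t by (auto simp: closed_segment_eq_real_ivl split: if_splits)
        then have "norm (q + t *\<^sub>R b - x) \<le> (\<Sum>b\<in>B. \<bar>h \<bullet> b\<bar>) + \<bar>h \<bullet> b\<bar>"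
          using nq bB norm_triangle_ineq[of "q - x" "t *\<^sub>R b"]
          by (simp add: algebra_simps)
        also have "\<dots> < min r \<delta>" using sB2 sumB nh by linarith
        finally have "norm (q + t *\<^sub>R b - x) < min r \<delta>" .
        then show ?thesis using r by (auto simp: dist_norm norm_minus_commute subset_iff)
      qed
      have step: "\<bar>f (q + (h \<bullet> b) *\<^sub>R b) - f (q + 0 *\<^sub>R b) - (h \<bullet> b) * D b x\<bar> \<le> \<bar>h \<bullet> b\<bar> * \<epsilon>"
      proof (rule mvt_bound[where \<phi>="\<lambda>t. f (q + t *\<^sub>R b)" and \<phi>'="\<lambda>t. D b (q + t *\<^sub>R b)"])
        fix t assume t: "t \<in> closed_segment 0 (h \<bullet> b)"
        have "((\<lambda>s. f ((q + t *\<^sub>R b) + s *\<^sub>R b)) has_real_derivative D b (q + t *\<^sub>R b)) (at 0)"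
          using D pt[OF t] bB by blast
        then have "((\<lambda>s. f (q + (s + t) *\<^sub>R b)) has_real_derivative D b (q + t *\<^sub>R b)) (at 0)"
          by (simp add: algebra_simps scaleR_add_left)
        then show "((\<lambda>t. f (q + t *\<^sub>R b)) has_real_derivative D b (q + t *\<^sub>R b)) (at t)"
          using DERIV_shift[of "\<lambda>t. f (q + t *\<^sub>R b)" _ 0 t] by simp
        show "\<bar>D b (q + t *\<^sub>R b) - D b x\<bar> \<le> \<epsilon>"
          using \<delta>(2)[of "q + t *\<^sub>R b"] pt[OF t] bB by (auto simp: dist_real_def)
      qed
      have hb: "\<bar>h \<bullet> b\<bar> * \<epsilon> \<le> \<epsilon> * norm h" using Basis_le_norm[OF bB, of h] \<epsilon>
        by (simp add: mult.commute mult_left_mono)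
      have e1: "x + (\<Sum>b\<in>insert b B. (h \<bullet> b) *\<^sub>R b) = q + (h \<bullet> b) *\<^sub>R b"
        using insert.hyps by (simp add: q_def algebra_simps)
      have e2: "(\<Sum>b\<in>insert b B. (h \<bullet> b) * D b x) = (h \<bullet> b) * D b x + (\<Sum>b\<in>B. (h \<bullet> b) * D b x)"
        using insert.hyps by simp
      have cB: "real (card (insert b B)) * (\<epsilon> * norm h) = real (card B) * (\<epsilon> * norm h) + \<epsilon> * norm h"
        using insert.hyps by (simp add: algebra_simps)
      show ?case unfolding e1 e2 cB using IH step hb by (simp add: abs_le_iff)
    qed
    have "\<bar>f (x + (\<Sum>b\<in>Basis. (h \<bullet> b) *\<^sub>R b)) - f x - (\<Sum>b\<in>Basis. (h \<bullet> b) * D b x)\<bar>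
        \<le> n * (\<epsilon> * norm h)" using main[OF finite_Basis] by (simp add: n_def)
    then show "norm (f y - f x - (\<Sum>b\<in>Basis. ((y - x) \<bullet> b) * D b x)) \<le> e * norm (y - x)"
      using n by (simp add: euclidean_representation h_def \<epsilon>_def)
  qed
qed

lemma smooth_frechet:
  fixes g :: "'a::euclidean_space \<Rightarrow> real"
  assumes sm: "smooth_on U g" and y: "y \<in> U"
  shows "(dirderivs vs g has_derivative (\<lambda>h. \<Sum>b\<in>Basis. (h \<bullet> b) * dirderivs (b # vs) g y)) (at y)"
proof (rule partials_frechet[where U=U])
  show "open U" using sm by (simp add: smooth_on_def)
  show "y \<in> U" by fact
  fix z b assume z: "z \<in> U"
  have "(\<lambda>t. dirderivs vs g (z + t *\<^sub>R b)) differentiable (at 0)"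
    using sm z by (simp add: smooth_on_def)
  then have "((\<lambda>t. dirderivs vs g (z + t *\<^sub>R b)) has_vector_derivative dirderivs (b # vs) g z) (at 0)"
    by (simp add: vector_derivative_works)
  then show "((\<lambda>t. dirderivs vs g (z + t *\<^sub>R b)) has_real_derivative dirderivs (b # vs) g z) (at 0)"
    by (simp add: has_real_derivative_iff_has_vector_derivative)
next
  fix b :: 'a
  show "continuous (at y) (dirderivs (b # vs) g)" using sm y unfolding smooth_on_def by blast
qed

lemma smooth_cont:
  assumes sm: "smooth_on U g" and y: "y \<in> U"
  shows "continuous (at y) (dirderivs vs g)"
  using sm y unfolding smooth_on_def by blast

lemma smooth_chain:
  fixes g :: "'a::euclidean_space \<Rightarrow> real"
  assumes sm: "smooth_on U g" and cU: "c s \<in> U"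
    and cd: "(c has_vector_derivative c1) (at s)"
  shows "((\<lambda>s. dirderivs vs g (c s)) has_real_derivative (\<Sum>b\<in>Basis. (c1 \<bullet> b) * dirderivs (b # vs) g (c s))) (at s)"
proof -
  have "((\<lambda>s. dirderivs vs g (c s)) has_derivative (\<lambda>t. \<Sum>b\<in>Basis. ((t *\<^sub>R c1) \<bullet> b) * dirderivs (b # vs) g (c s))) (at s)"
    using has_derivative_compose[OF cd[unfolded has_vector_derivative_def] smooth_frechet[OF sm cU]] .
  moreover have "(\<lambda>t. \<Sum>b\<in>Basis. ((t *\<^sub>R c1) \<bullet> b) * dirderivs (b # vs) g (c s))
      = (*) (\<Sum>b\<in>Basis. (c1 \<bullet> b) * dirderivs (b # vs) g (c s))"
    by (auto simp: fun_eq_iff sum_distrib_left algebra_simps)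
  ultimately show ?thesis by (simp add: has_field_derivative_def)
qed

lemma smooth_curve2:
  fixes g :: "'a::euclidean_space \<Rightarrow> real"
  assumes sm: "smooth_on U g" and cU: "\<And>s. c s \<in> U"
    and cd: "\<And>s. (c has_vector_derivative c1 s) (at s)"
    and cd1: "\<And>s. (c1 has_vector_derivative c2 s) (at s)"
    and cc2: "\<And>s. isCont c2 s"
  defines "d1 \<equiv> \<lambda>s. \<Sum>b\<in>Basis. (c1 s \<bullet> b) * dirderivs [b] g (c s)"
  defines "d2 \<equiv> \<lambda>s. \<Sum>b\<in>Basis. ((c2 s \<bullet> b) * dirderivs [b] g (c s)
                    + (c1 s \<bullet> b) * (\<Sum>b'\<in>Basis. (c1 s \<bullet> b') * dirderivs [b', b] g (c s)))"
  shows "((\<lambda>s. g (c s)) has_real_derivative d1 s) (at s)"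
    and "(d1 has_real_derivative d2 s) (at s)"
    and "isCont d2 s" and "isCont (\<lambda>s. g (c s)) s" and "isCont d1 s"
proof -
  show g1: "((\<lambda>s. g (c s)) has_real_derivative d1 s) (at s)" for s
    using smooth_chain[OF sm cU cd, where vs="[]"] by (simp add: d1_def)
  have db: "((\<lambda>x. c1 x \<bullet> b) has_real_derivative c2 s \<bullet> b) (at s)" for b
  proof -
    have "((\<lambda>x. c1 x \<bullet> b) has_derivative (\<lambda>t. (t *\<^sub>R c2 s) \<bullet> b)) (at s)"
      using cd1[of s] unfolding has_vector_derivative_def by (rule has_derivative_inner_left)
    moreover have "(\<lambda>t. (t *\<^sub>R c2 s) \<bullet> b) = (*) (c2 s \<bullet> b)" by (auto simp: fun_eq_iff)
    ultimately show ?thesis by (simp add: has_field_derivative_def)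
  qed
  have dg: "((\<lambda>x. dirderivs [b] g (c x)) has_real_derivative (\<Sum>b'\<in>Basis. (c1 s \<bullet> b') * dirderivs [b', b] g (c s))) (at s)" for b
    using smooth_chain[OF sm cU cd, where vs="[b]"] by simp
  have "(d1 has_real_derivative (\<Sum>b\<in>Basis. (c2 s \<bullet> b) * dirderivs [b] g (c s) + (\<Sum>b'\<in>Basis. (c1 s \<bullet> b') * dirderivs [b', b] g (c s)) * (c1 s \<bullet> b))) (at s)"
    unfolding d1_def by (intro DERIV_sum DERIV_mult db dg)
  then show "(d1 has_real_derivative d2 s) (at s)"
    by (simp add: d2_def mult.commute)
  have cc: "isCont c s" for s using cd has_vector_derivative_continuous by blast
  have cc1: "isCont c1 s" for s using cd1 has_vector_derivative_continuous by blast
  have cg: "isCont (\<lambda>s. dirderivs vs g (c s)) s" for vs s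
    by (rule isCont_o2[OF cc smooth_cont[OF sm cU]])
  show "isCont d2 s" unfolding d2_def
    by (intro continuous_intros cc1 cc2 cg)
  show "isCont d1 s" unfolding d1_def
    by (intro continuous_intros cc1 cg)
  show "isCont (\<lambda>s. g (c s)) s" using cg[where vs="[]"] by simp
qed




definition Kc :: "'a::real_normed_vector \<Rightarrow> 'a \<Rightarrow> 'a \<Rightarrow> nat \<Rightarrow> real \<Rightarrow> 'a" where
  "Kc A B C k x = cos (x + real k * pi / 2) *\<^sub>R A + sin (x + real k * pi / 2) *\<^sub>R B + (if k = 0 then C else 0)"

lemma Kc_deriv: "(Kc A B C k has_vector_derivative Kc A B C (Suc k) x) (at x within S)"
proof -
  have "((\<lambda>x. cos (x + real k * pi / 2) *\<^sub>R A + sin (x + real k * pi / 2) *\<^sub>R B + (if k = 0 then C else 0))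
     has_vector_derivative (- sin (x + real k * pi / 2) *\<^sub>R A + cos (x + real k * pi / 2) *\<^sub>R B)) (at x within S)"
    by (auto intro!: derivative_eq_intros)
  moreover have e: "x + real (Suc k) * pi / 2 = (x + real k * pi / 2) + pi / 2"
    by (simp add: algebra_simps)
  have "- sin (x + real k * pi / 2) = cos (x + real (Suc k) * pi / 2)"
    "cos (x + real k * pi / 2) = sin (x + real (Suc k) * pi / 2)"
    unfolding e by (simp_all add: cos_add sin_add)
  ultimately show ?thesis unfolding Kc_def by (simp add: fun_eq_iff)
qed

lemma Kc_line: "((\<lambda>t. Kc A B C k (x + t *\<^sub>R v)) has_vector_derivative v *\<^sub>R Kc A B C (Suc k) x) (at 0)"
proof -
  have f: "((\<lambda>t. x + t *\<^sub>R v) has_vector_derivative v) (at 0)"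
    by (auto intro!: derivative_eq_intros)
  show ?thesis using vector_diff_chain_at[OF f Kc_deriv] by (simp add: o_def)
qed

lemma Kc_cont: "isCont (Kc A B C k) x"
  using Kc_deriv has_vector_derivative_continuous by blast

lemma dirderivs_Kc: "dirderivs vs (Kc A B C 0) = (\<lambda>x. prod_list vs *\<^sub>R Kc A B C (length vs) x)"
proof (induction vs)
  case Nil then show ?case by simp
next
  case (Cons v vs)
  show ?case
  proof
    fix x
    have "((\<lambda>t. prod_list vs *\<^sub>R Kc A B C (length vs) (x + t *\<^sub>R v)) has_vector_derivative
        prod_list vs *\<^sub>R (v *\<^sub>R Kc A B C (Suc (length vs)) x)) (at 0)"
      using has_vector_derivative_scaleR[OF DERIV_const Kc_line] by simp
    then show "dirderivs (v # vs) (Kc A B C 0) x = prod_list (v # vs) *\<^sub>R Kc A B C (length (v # vs)) x"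
      using Cons by (simp add: vector_derivative_at mult.commute)
  qed
qed

lemma smooth_Kc: "open S \<Longrightarrow> smooth_on S (Kc A B C 0 :: real \<Rightarrow> 'a::euclidean_space)"
  unfolding smooth_on_def dirderivs_Kc
proof (intro conjI allI ballI)
  fix vs :: "real list" and x v
  show "isCont (\<lambda>x. prod_list vs *\<^sub>R Kc A B C (length vs) x) x"
    by (intro continuous_intros Kc_cont)
  have "((\<lambda>t. prod_list vs *\<^sub>R Kc A B C (length vs) (x + t *\<^sub>R v)) has_vector_derivative
        prod_list vs *\<^sub>R (v *\<^sub>R Kc A B C (Suc (length vs)) x)) (at 0)"
      using has_vector_derivative_scaleR[OF DERIV_const Kc_line] by simp
  then show "(\<lambda>t. prod_list vs *\<^sub>R Kc A B C (length vs) (x + t *\<^sub>R v)) differentiable at 0"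
    using differentiable_def has_vector_derivative_def by blast
qed




definition PP :: "real \<Rightarrow> real" where "PP y = exp y / sqrt (1 + exp (2*y))"
definition QQ :: "real \<Rightarrow> real" where "QQ y = 1 / sqrt (1 + exp (2*y))"

lemma PP_pos: "PP y > 0" by (simp add: PP_def add_pos_pos)
lemma QQ_pos: "QQ y > 0" by (simp add: QQ_def add_pos_pos)
lemma PQ_sq: "PP y ^ 2 + QQ y ^ 2 = 1"
proof -
  define R where "R = sqrt (1 + exp (2*y))"
  have pos: "1 + exp (2*y) > 0" using exp_gt_zero[of "2*y"] by linarith
  have R2: "R ^ 2 = 1 + exp (2*y)" using pos unfolding R_def by (simp only: real_sqrt_pow2 less_imp_le)
  have e: "exp y ^ 2 = exp (2*y)" by (simp only: exp_double)
  have "PP y ^ 2 + QQ y ^ 2 = (exp y ^ 2 + 1) / R ^ 2"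
    unfolding PP_def QQ_def R_def[symmetric] by (simp only: power_divide add_divide_distrib power_one)
  also have "\<dots> = 1" using pos unfolding e R2 by simp
  finally show ?thesis .
qed

lemma powr_half: "a > 0 \<Longrightarrow> a powr (-1/2) = 1 / sqrt a"
proof -
  assume a: "a > 0"
  have "a powr (-1/2) = a powr (-(1/2))" by simp
  also have "\<dots> = inverse (a powr (1/2))" by (rule powr_minus)
  also have "\<dots> = 1 / sqrt a" using a by (simp add: powr_half_sqrt inverse_eq_divide)
  finally show ?thesis .
qed

lemma QQ_eq: "(1 + exp (2*y)) powr (-1/2) = QQ y"
proof -
  have "1 + exp (2*y) > 0" by (simp add: add_pos_pos)
  then show ?thesis unfolding QQ_def by (rule powr_half)
qed

lemma PP_eq: "(1 + exp (-2*y)) powr (-1/2) = PP y"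
proof -
  have pos: "1 + exp (-2*y) > 0" using exp_gt_zero[of "-2*y"] by linarith
  have sq: "\<And>x::real. x > 0 \<Longrightarrow> sqrt (x^2) = x" by simp
  have ey: "sqrt (exp (2*y)) = exp y"
    unfolding exp_double by (rule sq[OF exp_gt_zero])
  have "sqrt (1 + exp (-2*y)) * exp y = sqrt ((1 + exp (-2*y)) * exp (2*y))"
    by (simp only: real_sqrt_mult ey)
  also have "(1 + exp (-2*y)) * exp (2*y) = 1 + exp (2*y)"
  proof -
    have "exp (-2*y) * exp (2*y) = exp (-2*y + 2*y)" by (rule exp_add[symmetric])
    also have "-2*y + 2*y = 0" by linarith
    finally have "exp (-2*y) * exp (2*y) = 1" by (simp only: exp_zero)
    then show ?thesis by (simp only: distrib_right mult_1_left)
  qed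
  finally have e: "sqrt (1 + exp (-2*y)) * exp y = sqrt (1 + exp (2*y))" .
  have gen: "\<And>a b::real. b \<noteq> 0 \<Longrightarrow> 1 / a = b / (a * b)" by simp
  have h1: "(1 + exp (-2*y)) powr (-1/2) = 1 / sqrt (1 + exp (-2*y))" by (rule powr_half[OF pos])
  have h2: "1 / sqrt (1 + exp (-2*y)) = exp y / (sqrt (1 + exp (-2*y)) * exp y)" by (rule gen) (rule exp_not_eq_zero)
  have h3: "exp y / (sqrt (1 + exp (-2*y)) * exp y) = PP y" unfolding e PP_def ..
  show ?thesis by (rule trans[OF h1 trans[OF h2 h3]])
qed

lemma Xmap_eq: "Xmap u p = (PP (u p) *\<^sub>R fst p, QQ (u p) *\<^sub>R snd p)"
  using PP_eq[of "u p"] QQ_eq[of "u p"] by (simp add: Xmap_def)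

lemma R_deriv: "((\<lambda>y. sqrt (1 + exp (2*y))) has_real_derivative exp (2*y) / sqrt (1 + exp (2*y))) (at y)"
proof -
  have pos: "1 + exp (2*y) > 0" using exp_gt_zero[of "2*y"] by linarith
  have d1: "((\<lambda>y. 1 + exp (2*y)) has_real_derivative exp (2*y) * 2) (at y)"
    by (auto intro!: derivative_eq_intros)
  have "((\<lambda>y. sqrt (1 + exp (2*y))) has_real_derivative inverse (sqrt (1 + exp (2*y))) / 2 * (exp (2*y) * 2)) (at y)"
    by (rule DERIV_chain2[OF DERIV_real_sqrt[OF pos] d1])
  moreover have "inverse (sqrt (1 + exp (2*y))) / 2 * (exp (2*y) * 2) = exp (2*y) / sqrt (1 + exp (2*y))"
    by (simp add: inverse_eq_divide)
  ultimately show ?thesis by (rule DERIV_cong)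
qed

lemma PP_deriv: "(PP has_real_derivative PP y * QQ y ^ 2) (at y)"
proof -
  define R where "R = sqrt (1 + exp (2*y))"
  have pos: "1 + exp (2*y) > 0" using exp_gt_zero[of "2*y"] by linarith
  have R: "R > 0" "R * R = 1 + exp (2*y)" using pos by (simp_all add: R_def)
  have d: "((\<lambda>y. exp y / sqrt (1 + exp (2*y))) has_real_derivative
      (exp y * R - exp y * (exp (2*y) / R)) / (R * R)) (at y)"
    unfolding R_def using R(1) by (intro DERIV_divide DERIV_exp R_deriv) (simp add: R_def)
  have "(exp y * R - exp y * (exp (2*y) / R)) / (R * R) = exp y * (R * R - exp (2*y)) / (R * R * R)"
    using R(1) by (simp add: field_simps)
  also have "\<dots> = PP y * QQ y ^ 2"
    unfolding PP_def QQ_def R_def[symmetric] using R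
    by (simp add: field_simps power2_eq_square)
  finally show ?thesis using d unfolding PP_def by simp
qed

lemma QQ_deriv: "(QQ has_real_derivative - (QQ y * PP y ^ 2)) (at y)"
proof -
  define R where "R = sqrt (1 + exp (2*y))"
  have pos: "1 + exp (2*y) > 0" using exp_gt_zero[of "2*y"] by linarith
  have R: "R > 0" "R * R = 1 + exp (2*y)" using pos by (simp_all add: R_def)
  have e: "exp y * exp y = exp (2*y)" by (simp add: exp_double power2_eq_square)
  have d: "((\<lambda>y. 1 / sqrt (1 + exp (2*y))) has_real_derivative
      (0 * R - 1 * (exp (2*y) / R)) / (R * R)) (at y)"
    unfolding R_def using R(1) by (intro DERIV_divide DERIV_const R_deriv) (simp add: R_def)
  have "(0 * R - 1 * (exp (2*y) / R)) / (R * R) = - (exp y * exp y) / (R * R * R)"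
    using R(1) by (simp add: field_simps e)
  also have "\<dots> = - (QQ y * PP y ^ 2)"
    unfolding PP_def QQ_def R_def[symmetric] using R
    by (simp add: field_simps power2_eq_square)
  finally show ?thesis using d unfolding QQ_def by simp
qed




lemma circ_norm:
  fixes \<gamma> X :: "'a::real_inner"
  assumes "norm \<gamma> = 1" "norm X = 1" "\<gamma> \<bullet> X = 0"
  shows "norm (cos s *\<^sub>R \<gamma> + sin s *\<^sub>R X) = 1"
proof -
  have g: "\<gamma> \<bullet> \<gamma> = 1" "X \<bullet> X = 1" "X \<bullet> \<gamma> = 0"
    using assms by (simp_all add: power2_norm_eq_inner[symmetric] inner_commute)
  have "(norm (cos s *\<^sub>R \<gamma> + sin s *\<^sub>R X))^2 = (cos s)^2 + (sin s)^2"
    unfolding power2_norm_eq_inner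
    by (simp add: inner_add_left inner_add_right g assms(3) power2_eq_square)
  then have "(norm (cos s *\<^sub>R \<gamma> + sin s *\<^sub>R X))^2 = 1" by simp
  then show ?thesis using norm_ge_zero[of "cos s *\<^sub>R \<gamma> + sin s *\<^sub>R X"]
    by (auto simp: power2_eq_1_iff)
qed

lemma pq_derivs:
  assumes dw: "\<And>s. (w has_real_derivative D s) (at s)"
    and dD: "(D has_real_derivative a2) (at 0)"
  shows "((\<lambda>s. PP (w s)) has_real_derivative PP (w s) * QQ (w s)^2 * D s) (at s)"
    and "((\<lambda>s. QQ (w s)) has_real_derivative - (QQ (w s) * PP (w s)^2) * D s) (at s)"
    and "((\<lambda>s. PP (w s) * QQ (w s)^2 * D s) has_real_derivative
           PP (w 0)*QQ (w 0)^4*D 0^2 - 2*PP (w 0)^3*QQ (w 0)^2*D 0^2 + PP (w 0)*QQ (w 0)^2*a2) (at 0)"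
    and "((\<lambda>s. - (QQ (w s) * PP (w s)^2) * D s) has_real_derivative
           QQ (w 0)*PP (w 0)^4*D 0^2 - 2*PP (w 0)^2*QQ (w 0)^3*D 0^2 - QQ (w 0)*PP (w 0)^2*a2) (at 0)"
proof -
  define P where "P = PP (w 0)"
  define Q where "Q = QQ (w 0)"
  define a where "a = D 0"
  show dp: "((\<lambda>s. PP (w s)) has_real_derivative PP (w s) * QQ (w s)^2 * D s) (at s)" for s
    using DERIV_chain2[OF PP_deriv dw] .
  show dq: "((\<lambda>s. QQ (w s)) has_real_derivative - (QQ (w s) * PP (w s)^2) * D s) (at s)" for s
    using DERIV_chain2[OF QQ_deriv dw] .
  have sq: "((\<lambda>s. f s ^ 2) has_real_derivative 2 * f 0 * f') (at 0)"
    if "(f has_real_derivative f') (at 0)" for f f'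
    by (rule DERIV_cong[OF DERIV_power[OF that, where n=2]]) simp
  have "((\<lambda>s. PP (w s) * QQ (w s)^2 * D s) has_real_derivative
      ((P * Q^2 * a) * Q^2 + (2 * Q * (- (Q * P^2) * a)) * P) * a + a2 * (P * Q^2)) (at 0)"
    unfolding P_def Q_def a_def
    by (rule DERIV_mult DERIV_cong[OF DERIV_mult[OF dp sq[OF dq]]] dD | simp)+
  then show "((\<lambda>s. PP (w s) * QQ (w s)^2 * D s) has_real_derivative
           PP (w 0)*QQ (w 0)^4*D 0^2 - 2*PP (w 0)^3*QQ (w 0)^2*D 0^2 + PP (w 0)*QQ (w 0)^2*a2) (at 0)"
    unfolding P_def[symmetric] Q_def[symmetric] a_def[symmetric] by (rule DERIV_cong) (simp add: algebra_simps power2_eq_square power4_eq_xxxx power3_eq_cube)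
  have "((\<lambda>s. - (QQ (w s) * PP (w s)^2) * D s) has_real_derivative
      - ((- (Q * P^2) * a) * P^2 + (2 * P * (P * Q^2 * a)) * Q) * a + a2 * (- (Q * P^2))) (at 0)"
    unfolding P_def Q_def a_def
    by (rule DERIV_mult DERIV_minus DERIV_cong[OF DERIV_mult[OF dq sq[OF dp]]] dD | simp)+
  then show "((\<lambda>s. - (QQ (w s) * PP (w s)^2) * D s) has_real_derivative
           QQ (w 0)*PP (w 0)^4*D 0^2 - 2*PP (w 0)^2*QQ (w 0)^3*D 0^2 - QQ (w 0)*PP (w 0)^2*a2) (at 0)"
    unfolding P_def[symmetric] Q_def[symmetric] a_def[symmetric] by (rule DERIV_cong) (simp add: algebra_simps power2_eq_square power4_eq_xxxx power3_eq_cube)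
qed

lemma alg1:
  fixes P Q a a2 n1 n2 n3 :: real
  assumes PQ: "P^2 + Q^2 = 1" and E0: "P*n1 + Q*n3 = 0" and E1: "P*Q^2*a*n1 + P*n2 - Q*P^2*a*n3 = 0"
  shows "P * ((P*Q^4*a^2 - 2*P^3*Q^2*a^2 + P*Q^2*a2 - P)*n1 + 2*(P*Q^2*a)*n2 + (Q*P^4*a^2 - 2*P^2*Q^3*a^2 - Q*P^2*a2)*n3)
     = P * ((P*n3 - Q*n1) * P * Q * (1 - a2 + a^2))"
  using assms by algebra

lemma alg2:
  fixes P Q b b2 n1 n3 n4 :: real
  assumes PQ: "P^2 + Q^2 = 1" and E0: "P*n1 + Q*n3 = 0" and E2: "P*Q^2*b*n1 - Q*P^2*b*n3 + Q*n4 = 0"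
  shows "Q * ((P*Q^4*b^2 - 2*P^3*Q^2*b^2 + P*Q^2*b2)*n1 + (Q*P^4*b^2 - 2*P^2*Q^3*b^2 - Q*P^2*b2 - Q)*n3 + 2*(-Q*P^2*b)*n4)
     = Q * (-(P*n3 - Q*n1) * P * Q * (1 + b2 + b^2))"
  using assms by algebra

lemma Kc0: "Kc A B C 0 s = cos s *\<^sub>R A + sin s *\<^sub>R B + C"
  by (simp add: Kc_def)

lemma Kc1_0: "Kc A B C (Suc 0) 0 = B"
  by (simp add: Kc_def)

lemma key_point:
  fixes g u :: "'a::euclidean_space \<times> 'b::euclidean_space \<Rightarrow> real" and \<gamma> X :: 'a and \<rho> Y :: 'b
  assumes sc: "strictly_convex_hypersurface (sphere_prod :: ('a \<times> 'b) set) (Xmap u)"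
    and ug: "\<And>z. z \<in> (sphere_prod :: ('a \<times> 'b) set) \<Longrightarrow> u z = g z"
    and n: "norm \<gamma> = 1" "norm X = 1" "\<gamma> \<bullet> X = 0" "norm \<rho> = 1" "norm Y = 1" "\<rho> \<bullet> Y = 0"
    and w1: "\<And>s. w1 s = g (cos s *\<^sub>R \<gamma> + sin s *\<^sub>R X, \<rho>)"
    and dw1: "\<And>s. (w1 has_real_derivative D1 s) (at s)" and dD1: "(D1 has_real_derivative a2) (at 0)"
    and w2: "\<And>s. w2 s = g (\<gamma>, cos s *\<^sub>R \<rho> + sin s *\<^sub>R Y)"
    and dw2: "\<And>s. (w2 has_real_derivative D2 s) (at s)" and dD2: "(D2 has_real_derivative b2) (at 0)"
  shows "\<exists>k. k * (1 - a2 + (D1 0)^2) > 0 \<and> - k * (1 + b2 + (D2 0)^2) > 0"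
proof -
  let ?M = "sphere_prod :: ('a \<times> 'b) set"
  have pM: "(\<gamma>, \<rho>) \<in> ?M" by (simp add: sphere_prod_def n)
  from sc pM obtain \<nu> where nF: "\<nu> \<bullet> Xmap u (\<gamma>, \<rho>) = 0"
    and tang: "\<And>c. smooth_curve_through ?M (\<gamma>, \<rho>) c \<Longrightarrow> \<nu> \<bullet> vector_derivative (Xmap u \<circ> c) (at 0) = 0"
    and conv: "\<And>c. smooth_curve_through ?M (\<gamma>, \<rho>) c \<Longrightarrow> vector_derivative c (at 0) \<noteq> 0 \<Longrightarrow>
          \<nu> \<bullet> vector_derivative (\<lambda>t. vector_derivative (Xmap u \<circ> c) (at t)) (at 0) > 0"
    unfolding strictly_convex_hypersurface_def by blast
  obtain \<nu>1 \<nu>2 where \<nu>: "\<nu> = (\<nu>1, \<nu>2)" by (cases \<nu>)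
  define n1 where "n1 = \<nu>1 \<bullet> \<gamma>"
  define n2 where "n2 = \<nu>1 \<bullet> X"
  define n3 where "n3 = \<nu>2 \<bullet> \<rho>"
  define n4 where "n4 = \<nu>2 \<bullet> Y"
  have w10: "w1 0 = g (\<gamma>, \<rho>)" and w20: "w2 0 = g (\<gamma>, \<rho>)" by (simp_all add: w1 w2)
  define P where "P = PP (w1 0)"
  define Q where "Q = QQ (w1 0)"
  define a where "a = D1 0"
  define b where "b = D2 0"
  have P2: "PP (w2 0) = P" "QQ (w2 0) = Q" by (simp_all add: P_def Q_def w10 w20)
  have PQ: "P^2 + Q^2 = 1" "P > 0" "Q > 0" by (simp_all add: P_def Q_def PQ_sq PP_pos QQ_pos)
  have E0: "P * n1 + Q * n3 = 0"
    using nF ug[OF pM] by (simp add: Xmap_eq \<nu> n1_def n3_def P_def Q_def w10)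

  define c1 where "c1 = Kc ((\<gamma>, 0)::'a\<times>'b) (X, 0) (0, \<rho>) 0"
  have c1e: "c1 s = (cos s *\<^sub>R \<gamma> + sin s *\<^sub>R X, \<rho>)" for s by (simp add: c1_def Kc0)
  have c1M: "c1 s \<in> ?M" for s by (simp add: c1e sphere_prod_def circ_norm n)
  have sm1: "smooth_on {-1<..<1} c1" unfolding c1_def by (rule smooth_Kc) simp
  have sc1: "smooth_curve_through ?M (\<gamma>, \<rho>) c1"
    unfolding smooth_curve_through_def
    using c1M by (intro conjI exI[of _ 1]) (auto simp: c1e sm1 simp del: sphere_prod_def)
  have "vector_derivative c1 (at 0) = Kc ((\<gamma>, 0)::'a\<times>'b) (X, 0) (0, \<rho>) (Suc 0) 0"
    unfolding c1_def by (rule vector_derivative_at[OF Kc_deriv])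
  then have vc1: "vector_derivative c1 (at 0) \<noteq> 0" using n(2) by (auto simp: Kc1_0 zero_prod_def)
  have Fc1: "Xmap u \<circ> c1 = (\<lambda>s. (PP (w1 s) *\<^sub>R (cos s *\<^sub>R \<gamma> + sin s *\<^sub>R X), QQ (w1 s) *\<^sub>R \<rho>))"
    by (rule ext) (simp add: Xmap_eq c1e w1 ug[OF c1M[unfolded c1e]])
  define G1 where "G1 s = ((PP (w1 s) * QQ (w1 s)^2 * D1 s) *\<^sub>R (cos s *\<^sub>R \<gamma> + sin s *\<^sub>R X)
      + PP (w1 s) *\<^sub>R (- sin s *\<^sub>R \<gamma> + cos s *\<^sub>R X), (- (QQ (w1 s) * PP (w1 s)^2) * D1 s) *\<^sub>R \<rho>)" for s
  have dP1: "((\<lambda>s. PP (w1 s)) has_real_derivative PP (w1 s) * QQ (w1 s)^2 * D1 s) (at s)" for s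
    by (rule pq_derivs(1)[OF dw1 dD1])
  have dQ1: "((\<lambda>s. QQ (w1 s)) has_real_derivative - (QQ (w1 s) * PP (w1 s)^2) * D1 s) (at s)" for s
    by (rule pq_derivs(2)[OF dw1 dD1])
  have dG1: "((Xmap u \<circ> c1) has_vector_derivative G1 s) (at s)" for s
  proof -
    have dgam: "((\<lambda>s. cos s *\<^sub>R \<gamma> + sin s *\<^sub>R X) has_vector_derivative (- sin s *\<^sub>R \<gamma> + cos s *\<^sub>R X)) (at s)"
      by (auto intro!: derivative_eq_intros)
    have "((\<lambda>s. (PP (w1 s) *\<^sub>R (cos s *\<^sub>R \<gamma> + sin s *\<^sub>R X), QQ (w1 s) *\<^sub>R \<rho>)) has_vector_derivative
      (PP (w1 s) *\<^sub>R (- sin s *\<^sub>R \<gamma> + cos s *\<^sub>R X) + (PP (w1 s) * QQ (w1 s)^2 * D1 s) *\<^sub>R (cos s *\<^sub>R \<gamma> + sin s *\<^sub>R X),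
       QQ (w1 s) *\<^sub>R 0 + (- (QQ (w1 s) * PP (w1 s)^2) * D1 s) *\<^sub>R \<rho>)) (at s)"
      by (intro has_vector_derivative_Pair has_vector_derivative_scaleR dP1 dQ1 dgam has_vector_derivative_const)
    then show ?thesis unfolding Fc1 G1_def by (simp add: algebra_simps)
  qed
  have vd1: "(\<lambda>t. vector_derivative (Xmap u \<circ> c1) (at t)) = G1"
    using vector_derivative_at[OF dG1] by auto
  have T1: "\<nu> \<bullet> G1 0 = 0" using tang[OF sc1] vd1 by metis
  define V1 where "V1 = ((P*Q^4*a^2 - 2*P^3*Q^2*a^2 + P*Q^2*a2 - P) *\<^sub>R \<gamma> + (P*Q^2*a) *\<^sub>R X + (P*Q^2*a) *\<^sub>R X,
       (Q*P^4*a^2 - 2*P^2*Q^3*a^2 - Q*P^2*a2) *\<^sub>R \<rho>)"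
  have dV1: "(G1 has_vector_derivative V1) (at 0)"
  proof -
    have dgam: "((\<lambda>s. cos s *\<^sub>R \<gamma> + sin s *\<^sub>R X) has_vector_derivative (- sin 0 *\<^sub>R \<gamma> + cos 0 *\<^sub>R X)) (at 0)"
      by (auto intro!: derivative_eq_intros)
    have dgam': "((\<lambda>s. - sin s *\<^sub>R \<gamma> + cos s *\<^sub>R X) has_vector_derivative (- cos 0 *\<^sub>R \<gamma> - sin 0 *\<^sub>R X)) (at 0)"
      by (auto intro!: derivative_eq_intros)
    note dpd = pq_derivs(3)[OF dw1 dD1]
    note dqd = pq_derivs(4)[OF dw1 dD1]
    have "(G1 has_vector_derivative
      ((PP (w1 0) * QQ (w1 0)^2 * D1 0) *\<^sub>R (- sin 0 *\<^sub>R \<gamma> + cos 0 *\<^sub>R X)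
        + (PP (w1 0)*QQ (w1 0)^4*D1 0^2 - 2*PP (w1 0)^3*QQ (w1 0)^2*D1 0^2 + PP (w1 0)*QQ (w1 0)^2*a2) *\<^sub>R (cos 0 *\<^sub>R \<gamma> + sin 0 *\<^sub>R X)
       + (PP (w1 0) *\<^sub>R (- cos 0 *\<^sub>R \<gamma> - sin 0 *\<^sub>R X) + (PP (w1 0) * QQ (w1 0)^2 * D1 0) *\<^sub>R (- sin 0 *\<^sub>R \<gamma> + cos 0 *\<^sub>R X)),
       (- (QQ (w1 0) * PP (w1 0)^2) * D1 0) *\<^sub>R 0 + (QQ (w1 0)*PP (w1 0)^4*D1 0^2 - 2*PP (w1 0)^2*QQ (w1 0)^3*D1 0^2 - QQ (w1 0)*PP (w1 0)^2*a2) *\<^sub>R \<rho>)) (at 0)"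
      unfolding G1_def[abs_def]
      by (intro has_vector_derivative_Pair has_vector_derivative_add has_vector_derivative_scaleR dP1 dpd dqd dgam dgam' has_vector_derivative_const)
    then show ?thesis
      by (simp add: V1_def P_def Q_def a_def algebra_simps)
  qed
  have C1: "\<nu> \<bullet> V1 > 0" using conv[OF sc1 vc1] vd1 vector_derivative_at[OF dV1] by metis
  have E1: "P*Q^2*a*n1 + P*n2 - Q*P^2*a*n3 = 0"
    using T1 by (simp add: G1_def \<nu> n1_def n2_def n3_def P_def Q_def a_def algebra_simps inner_add_right)
  have H1: "(P*Q^4*a^2 - 2*P^3*Q^2*a^2 + P*Q^2*a2 - P)*n1 + 2*(P*Q^2*a)*n2 + (Q*P^4*a^2 - 2*P^2*Q^3*a^2 - Q*P^2*a2)*n3 > 0"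
    using C1 by (simp add: V1_def \<nu> n1_def n2_def n3_def inner_add_right algebra_simps)

  define c2 where "c2 = Kc ((0, \<rho>)::'a\<times>'b) (0, Y) (\<gamma>, 0) 0"
  have c2e: "c2 s = (\<gamma>, cos s *\<^sub>R \<rho> + sin s *\<^sub>R Y)" for s by (simp add: c2_def Kc0)
  have c2M: "c2 s \<in> ?M" for s by (simp add: c2e sphere_prod_def circ_norm n)
  have sm2: "smooth_on {-1<..<1} c2" unfolding c2_def by (rule smooth_Kc) simp
  have sc2: "smooth_curve_through ?M (\<gamma>, \<rho>) c2"
    unfolding smooth_curve_through_def
    using c2M by (intro conjI exI[of _ 1]) (auto simp: c2e sm2 simp del: sphere_prod_def)
  have "vector_derivative c2 (at 0) = Kc ((0, \<rho>)::'a\<times>'b) (0, Y) (\<gamma>, 0) (Suc 0) 0"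
    unfolding c2_def by (rule vector_derivative_at[OF Kc_deriv])
  then have vc2: "vector_derivative c2 (at 0) \<noteq> 0" using n(5) by (auto simp: Kc1_0 zero_prod_def)
  have Fc2: "Xmap u \<circ> c2 = (\<lambda>s. (PP (w2 s) *\<^sub>R \<gamma>, QQ (w2 s) *\<^sub>R (cos s *\<^sub>R \<rho> + sin s *\<^sub>R Y)))"
    by (rule ext) (simp add: Xmap_eq c2e w2 ug[OF c2M[unfolded c2e]])
  define G2 where "G2 s = ((PP (w2 s) * QQ (w2 s)^2 * D2 s) *\<^sub>R \<gamma>,
      (- (QQ (w2 s) * PP (w2 s)^2) * D2 s) *\<^sub>R (cos s *\<^sub>R \<rho> + sin s *\<^sub>R Y) + QQ (w2 s) *\<^sub>R (- sin s *\<^sub>R \<rho> + cos s *\<^sub>R Y))" for s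
  have dP2: "((\<lambda>s. PP (w2 s)) has_real_derivative PP (w2 s) * QQ (w2 s)^2 * D2 s) (at s)" for s
    by (rule pq_derivs(1)[OF dw2 dD2])
  have dQ2: "((\<lambda>s. QQ (w2 s)) has_real_derivative - (QQ (w2 s) * PP (w2 s)^2) * D2 s) (at s)" for s
    by (rule pq_derivs(2)[OF dw2 dD2])
  have dG2: "((Xmap u \<circ> c2) has_vector_derivative G2 s) (at s)" for s
  proof -
    have drh: "((\<lambda>s. cos s *\<^sub>R \<rho> + sin s *\<^sub>R Y) has_vector_derivative (- sin s *\<^sub>R \<rho> + cos s *\<^sub>R Y)) (at s)"
      by (auto intro!: derivative_eq_intros)
    have "((\<lambda>s. (PP (w2 s) *\<^sub>R \<gamma>, QQ (w2 s) *\<^sub>R (cos s *\<^sub>R \<rho> + sin s *\<^sub>R Y))) has_vector_derivative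
      (PP (w2 s) *\<^sub>R 0 + (PP (w2 s) * QQ (w2 s)^2 * D2 s) *\<^sub>R \<gamma>,
       QQ (w2 s) *\<^sub>R (- sin s *\<^sub>R \<rho> + cos s *\<^sub>R Y) + (- (QQ (w2 s) * PP (w2 s)^2) * D2 s) *\<^sub>R (cos s *\<^sub>R \<rho> + sin s *\<^sub>R Y))) (at s)"
      by (intro has_vector_derivative_Pair has_vector_derivative_scaleR dP2 dQ2 drh has_vector_derivative_const)
    then show ?thesis unfolding Fc2 G2_def by (simp add: algebra_simps)
  qed
  have vd2: "(\<lambda>t. vector_derivative (Xmap u \<circ> c2) (at t)) = G2"
    using vector_derivative_at[OF dG2] by auto
  have T2: "\<nu> \<bullet> G2 0 = 0" using tang[OF sc2] vd2 by metis
  define V2 where "V2 = ((P*Q^4*b^2 - 2*P^3*Q^2*b^2 + P*Q^2*b2) *\<^sub>R \<gamma>,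
       (Q*P^4*b^2 - 2*P^2*Q^3*b^2 - Q*P^2*b2 - Q) *\<^sub>R \<rho> + (- (Q*P^2*b)) *\<^sub>R Y + (- (Q*P^2*b)) *\<^sub>R Y)"
  have dV2: "(G2 has_vector_derivative V2) (at 0)"
  proof -
    have drh: "((\<lambda>s. cos s *\<^sub>R \<rho> + sin s *\<^sub>R Y) has_vector_derivative (- sin 0 *\<^sub>R \<rho> + cos 0 *\<^sub>R Y)) (at 0)"
      by (auto intro!: derivative_eq_intros)
    have drh': "((\<lambda>s. - sin s *\<^sub>R \<rho> + cos s *\<^sub>R Y) has_vector_derivative (- cos 0 *\<^sub>R \<rho> - sin 0 *\<^sub>R Y)) (at 0)"
      by (auto intro!: derivative_eq_intros)
    note dpd = pq_derivs(3)[OF dw2 dD2]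
    note dqd = pq_derivs(4)[OF dw2 dD2]
    have "(G2 has_vector_derivative
      ((PP (w2 0) * QQ (w2 0)^2 * D2 0) *\<^sub>R 0 + (PP (w2 0)*QQ (w2 0)^4*D2 0^2 - 2*PP (w2 0)^3*QQ (w2 0)^2*D2 0^2 + PP (w2 0)*QQ (w2 0)^2*b2) *\<^sub>R \<gamma>,
       (- (QQ (w2 0) * PP (w2 0)^2) * D2 0) *\<^sub>R (- sin 0 *\<^sub>R \<rho> + cos 0 *\<^sub>R Y)
        + (QQ (w2 0)*PP (w2 0)^4*D2 0^2 - 2*PP (w2 0)^2*QQ (w2 0)^3*D2 0^2 - QQ (w2 0)*PP (w2 0)^2*b2) *\<^sub>R (cos 0 *\<^sub>R \<rho> + sin 0 *\<^sub>R Y)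
       + (QQ (w2 0) *\<^sub>R (- cos 0 *\<^sub>R \<rho> - sin 0 *\<^sub>R Y) + (- (QQ (w2 0) * PP (w2 0)^2) * D2 0) *\<^sub>R (- sin 0 *\<^sub>R \<rho> + cos 0 *\<^sub>R Y)))) (at 0)"
      unfolding G2_def[abs_def]
      by (intro has_vector_derivative_Pair has_vector_derivative_add has_vector_derivative_scaleR dQ2 dpd dqd drh drh' has_vector_derivative_const)
    then show ?thesis
      by (simp add: V2_def P2 b_def algebra_simps)
  qed
  have C2: "\<nu> \<bullet> V2 > 0" using conv[OF sc2 vc2] vd2 vector_derivative_at[OF dV2] by metis
  have E2: "P*Q^2*b*n1 - Q*P^2*b*n3 + Q*n4 = 0"
    using T2 by (simp add: G2_def \<nu> n1_def n3_def n4_def P2 b_def algebra_simps inner_add_right)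
  have H2: "(P*Q^4*b^2 - 2*P^3*Q^2*b^2 + P*Q^2*b2)*n1 + (Q*P^4*b^2 - 2*P^2*Q^3*b^2 - Q*P^2*b2 - Q)*n3 + 2*(-Q*P^2*b)*n4 > 0"
    using C2 by (simp add: V2_def \<nu> n1_def n3_def n4_def inner_add_right algebra_simps)

  define k where "k = P*n3 - Q*n1"
  have h1: "(P*Q) * (k * (1 - a2 + a^2)) > 0"
  proof -
    have "P * ((P*Q^4*a^2 - 2*P^3*Q^2*a^2 + P*Q^2*a2 - P)*n1 + 2*(P*Q^2*a)*n2 + (Q*P^4*a^2 - 2*P^2*Q^3*a^2 - Q*P^2*a2)*n3)
       = P * (k * P * Q * (1 - a2 + a^2))" unfolding k_def by (rule alg1[OF PQ(1) E0 E1])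
    then have "(P*Q^4*a^2 - 2*P^3*Q^2*a^2 + P*Q^2*a2 - P)*n1 + 2*(P*Q^2*a)*n2 + (Q*P^4*a^2 - 2*P^2*Q^3*a^2 - Q*P^2*a2)*n3
       = k * P * Q * (1 - a2 + a^2)" using PQ(2) by simp
    then show ?thesis using H1 by (simp add: algebra_simps)
  qed
  have h2: "(P*Q) * (- k * (1 + b2 + b^2)) > 0"
  proof -
    have "Q * ((P*Q^4*b^2 - 2*P^3*Q^2*b^2 + P*Q^2*b2)*n1 + (Q*P^4*b^2 - 2*P^2*Q^3*b^2 - Q*P^2*b2 - Q)*n3 + 2*(-Q*P^2*b)*n4)
       = Q * (- k * P * Q * (1 + b2 + b^2))" (is "?l = ?r") unfolding k_def by (rule alg2[OF PQ(1) E0 E2])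
    note eq2 = this
    have "(P*Q^4*b^2 - 2*P^3*Q^2*b^2 + P*Q^2*b2)*n1 + (Q*P^4*b^2 - 2*P^2*Q^3*b^2 - Q*P^2*b2 - Q)*n3 + 2*(-Q*P^2*b)*n4
       = - k * P * Q * (1 + b2 + b^2)"
      by (rule mult_left_cancel[THEN iffD1, OF _ eq2]) (use PQ(3) in simp)
    then show ?thesis using H2 by (simp add: algebra_simps)
  qed
  have pq: "P * Q > 0" using PQ by simp
  show ?thesis
    using h1 h2 pq zero_less_mult_pos unfolding a_def b_def by blast
qed




lemma periodic_nat:
  assumes per: "\<And>s. f (s + p) = f s"
  shows "f (z + real n * p) = f z"
proof (induction n)
  case 0 then show ?case by simp
next
  case (Suc n)
  have "z + real (Suc n) * p = (z + real n * p) + p" by (simp add: algebra_simps)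
  then have "f (z + real (Suc n) * p) = f ((z + real n * p) + p)" by (simp only:)
  then show ?case using Suc.IH per by (simp only:)
qed

lemma periodic_global_max:
  fixes f :: "real \<Rightarrow> real"
  assumes cont: "\<And>s. isCont f s" and per: "\<And>s. f (s + p) = f s" and p: "p > 0"
  shows "\<exists>x. \<forall>y. f y \<le> f x"
proof -
  have "continuous_on {0..p} f" using cont by (simp add: continuous_at_imp_continuous_on)
  then obtain x where x: "x \<in> {0..p}" "\<forall>y\<in>{0..p}. f y \<le> f x"
    using continuous_attains_sup[of "{0..p}" f] p by auto
  have "f y \<le> f x" for y
  proof -
    define k where "k = \<lfloor>y / p\<rfloor>"
    define z where "z = y - real_of_int k * p"
    have "real_of_int k \<le> y / p" "y / p < real_of_int k + 1" unfolding k_def by linarith+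
    then have kz: "real_of_int k * p \<le> y" "y < (real_of_int k + 1) * p" using p
      by (simp_all add: field_simps)
    have zr: "z \<in> {0..p}" using kz by (auto simp: z_def algebra_simps)
    have "f y = f z"
    proof (cases "k \<ge> 0")
      case True
      then have "y = z + real (nat k) * p" by (simp add: z_def)
      then show ?thesis using periodic_nat[of f p, OF per] by simp
    next
      case False
      then have "z = y + real (nat (-k)) * p" by (simp add: z_def)
      then show ?thesis using periodic_nat[of f p, OF per] by simp
    qed
    then show ?thesis using x zr by simp
  qed
  then show ?thesis by blast
qed

lemma max_second:
  fixes f f' :: "real \<Rightarrow> real"
  assumes d: "\<And>y. (f has_real_derivative f' y) (at y)" and dd: "(f' has_real_derivative l) (at x)"
    and mx: "\<forall>y. f y \<le> f x"
  shows "f' x = 0 \<and> l \<le> 0"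
proof
  show f0: "f' x = 0" using DERIV_local_max[OF d zero_less_one] mx by blast
  show "l \<le> 0"
  proof (rule ccontr)
    assume "\<not> l \<le> 0"
    then have "l > 0" by simp
    from DERIV_pos_inc_right[OF dd this] obtain e where e: "e > 0" "\<forall>h>0. h < e \<longrightarrow> f' x < f' (x + h)"
      by blast
    define h where "h = e / 2"
    have h: "h > 0" "h < e" using e by (simp_all add: h_def)
    have "continuous_on {x..x+h} f" using d
      by (meson DERIV_continuous continuous_at_imp_continuous_on)
    moreover have "\<And>z. x < z \<Longrightarrow> z < x + h \<Longrightarrow> f differentiable (at z)"
      using d real_differentiable_def by blast
    ultimately obtain l' z where z: "x < z" "z < x + h" "DERIV f z :> l'" "f (x + h) - f x = (x + h - x) * l'"
      using MVT[of x "x+h" f] h by auto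
    have "l' = f' z" using DERIV_unique[OF z(3) d] .
    moreover have "f' z > 0" using e(2)[rule_format, of "z - x"] z h f0 by simp
    ultimately have "f (x + h) - f x = h * f' z" "h * f' z > 0" using z h by simp_all
    then have "f (x + h) > f x" by linarith
    then show False using mx by (meson not_le)
  qed
qed

lemma min_second:
  fixes f f' :: "real \<Rightarrow> real"
  assumes d: "\<And>y. (f has_real_derivative f' y) (at y)" and dd: "(f' has_real_derivative l) (at x)"
    and mn: "\<forall>y. f x \<le> f y"
  shows "f' x = 0 \<and> l \<ge> 0"
proof -
  have "(\<lambda>y. - f' y) x = 0 \<and> - l \<le> 0"
    by (rule max_second[where f="\<lambda>y. - f y"]) (use d dd mn in \<open>auto intro!: derivative_eq_intros\<close>)
  then show ?thesis by simp
qed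

lemma circ_norm2:
  fixes \<gamma> X :: "'a::real_inner"
  assumes "norm \<gamma> = 1" "norm X = 1" "\<gamma> \<bullet> X = 0" "a^2 + b^2 = 1"
  shows "norm (a *\<^sub>R \<gamma> + b *\<^sub>R X) = 1"
proof -
  have g: "\<gamma> \<bullet> \<gamma> = 1" "X \<bullet> X = 1" "X \<bullet> \<gamma> = 0"
    using assms by (simp_all add: power2_norm_eq_inner[symmetric] inner_commute)
  have "(norm (a *\<^sub>R \<gamma> + b *\<^sub>R X))^2 = a^2 + b^2"
    unfolding power2_norm_eq_inner
    by (simp add: inner_add_left inner_add_right g assms(3) power2_eq_square)
  then have "(norm (a *\<^sub>R \<gamma> + b *\<^sub>R X))^2 = 1" using assms(4) by simp
  then show ?thesis using norm_ge_zero[of "a *\<^sub>R \<gamma> + b *\<^sub>R X"]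
    by (auto simp: power2_eq_1_iff)
qed

lemma curve_data:
  fixes g :: "'a::euclidean_space \<Rightarrow> real"
  assumes sm: "smooth_on U g" and cU: "\<And>s. Kc A B C 0 s \<in> U"
  shows "\<exists>d1 d2. (\<forall>s. ((\<lambda>s. g (Kc A B C 0 s)) has_real_derivative d1 s) (at s)) \<and>
      (\<forall>s. (d1 has_real_derivative d2 s) (at s)) \<and> (\<forall>s. isCont d2 s) \<and> (\<forall>s. isCont d1 s) \<and>
      (\<forall>s. isCont (\<lambda>s. g (Kc A B C 0 s)) s)"
proof -
  note r = smooth_curve2[OF sm cU Kc_deriv Kc_deriv Kc_cont]
  show ?thesis
    apply (intro exI conjI allI)
        apply (rule r(1))
       apply (rule r(2))
      apply (rule r(3))
     apply (rule r(5))
    apply (rule r(4))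
    done
qed

lemma shift_deriv:
  fixes f :: "real \<Rightarrow> real"
  shows "(f has_real_derivative D) (at (z + x)) \<Longrightarrow> ((\<lambda>s. f (z + s)) has_real_derivative D) (at x)"
  using DERIV_shift[of f D x z] by (simp add: add.commute)

lemma main_generic:
  fixes u :: "'a::euclidean_space \<times> 'b::euclidean_space \<Rightarrow> real" and \<gamma>0 X0 :: 'a and \<rho>0 Y0 :: 'b
  assumes n: "norm \<gamma>0 = 1" "norm X0 = 1" "\<gamma>0 \<bullet> X0 = 0" "norm \<rho>0 = 1" "norm Y0 = 1" "\<rho>0 \<bullet> Y0 = 0"
    and sm: "smooth_on_set (sphere_prod :: ('a \<times> 'b) set) u"
  shows "\<not> strictly_convex_hypersurface (sphere_prod :: ('a \<times> 'b) set) (Xmap u)"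
proof
  let ?M = "sphere_prod :: ('a \<times> 'b) set"
  assume sc: "strictly_convex_hypersurface ?M (Xmap u)"
  obtain U g where MU: "?M \<subseteq> U" and smg: "smooth_on U g" and gu: "\<forall>x\<in>?M. g x = u x"
    using sm unfolding smooth_on_set_def by blast
  have ug: "\<And>z. z \<in> ?M \<Longrightarrow> u z = g z" using gu by simp
  define gam where "gam s = cos s *\<^sub>R \<gamma>0 + sin s *\<^sub>R X0" for s
  define Xs where "Xs s = - sin s *\<^sub>R \<gamma>0 + cos s *\<^sub>R X0" for s
  define rh where "rh s = cos s *\<^sub>R \<rho>0 + sin s *\<^sub>R Y0" for s
  define Yt where "Yt s = - sin s *\<^sub>R \<rho>0 + cos s *\<^sub>R Y0" for s
  have gg: "\<gamma>0 \<bullet> \<gamma>0 = 1" "X0 \<bullet> X0 = 1" "X0 \<bullet> \<gamma>0 = 0" "\<rho>0 \<bullet> \<rho>0 = 1" "Y0 \<bullet> Y0 = 1" "Y0 \<bullet> \<rho>0 = 0"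
    using n by (simp_all add: power2_norm_eq_inner[symmetric] inner_commute)
  have ng: "norm (gam s) = 1" "norm (Xs s) = 1" "gam s \<bullet> Xs s = 0" for s
  proof -
    show "norm (gam s) = 1" unfolding gam_def by (rule circ_norm2[OF n(1-3)]) simp
    show "norm (Xs s) = 1" unfolding Xs_def by (rule circ_norm2[OF n(1-3)]) simp
    show "gam s \<bullet> Xs s = 0" unfolding gam_def Xs_def
      by (simp add: inner_add_left inner_add_right gg n(3) algebra_simps)
  qed
  have nr: "norm (rh s) = 1" "norm (Yt s) = 1" "rh s \<bullet> Yt s = 0" for s
  proof -
    show "norm (rh s) = 1" unfolding rh_def by (rule circ_norm2[OF n(4-6)]) simp
    show "norm (Yt s) = 1" unfolding Yt_def by (rule circ_norm2[OF n(4-6)]) simp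
    show "rh s \<bullet> Yt s = 0" unfolding rh_def Yt_def
      by (simp add: inner_add_left inner_add_right gg n(6) algebra_simps)
  qed
  have gshift: "cos \<sigma> *\<^sub>R gam s + sin \<sigma> *\<^sub>R Xs s = gam (s + \<sigma>)" for s \<sigma>
    by (simp add: gam_def Xs_def cos_add sin_add algebra_simps)
  have rshift: "cos \<sigma> *\<^sub>R rh s + sin \<sigma> *\<^sub>R Yt s = rh (s + \<sigma>)" for s \<sigma>
    by (simp add: rh_def Yt_def cos_add sin_add algebra_simps)
  have inM: "(gam s, rh t) \<in> ?M" for s t using ng nr by (simp add: sphere_prod_def)
  have inU: "(gam s, rh t) \<in> U" for s t using inM MU by blast

  have PT: "\<exists>d1 dd1 d2 dd2 k. (\<forall>\<sigma>. ((\<lambda>\<sigma>. g (gam (s + \<sigma>), rh t)) has_real_derivative d1 \<sigma>) (at \<sigma>)) \<and>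
      (\<forall>\<sigma>. (d1 has_real_derivative dd1 \<sigma>) (at \<sigma>)) \<and>
      (\<forall>\<sigma>. ((\<lambda>\<sigma>. g (gam s, rh (t + \<sigma>))) has_real_derivative d2 \<sigma>) (at \<sigma>)) \<and>
      (\<forall>\<sigma>. (d2 has_real_derivative dd2 \<sigma>) (at \<sigma>)) \<and>
      k * (1 - dd1 0 + (d1 0)^2) > 0 \<and> - k * (1 + dd2 0 + (d2 0)^2) > 0" for s t
  proof -
    have k1: "Kc ((gam s, 0)::'a\<times>'b) (Xs s, 0) (0, rh t) 0 \<sigma> = (gam (s + \<sigma>), rh t)" for \<sigma>
      by (simp add: Kc0 gshift[symmetric])
    have k2: "Kc ((0, rh t)::'a\<times>'b) (0, Yt t) (gam s, 0) 0 \<sigma> = (gam s, rh (t + \<sigma>))" for \<sigma>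
      by (simp add: Kc0 rshift[symmetric])
    obtain d1 dd1 where d1: "\<forall>\<sigma>. ((\<lambda>\<sigma>. g (gam (s + \<sigma>), rh t)) has_real_derivative d1 \<sigma>) (at \<sigma>)"
        "\<forall>\<sigma>. (d1 has_real_derivative dd1 \<sigma>) (at \<sigma>)"
      using curve_data[OF smg, of "(gam s, 0)" "(Xs s, 0)" "(0, rh t)"] unfolding k1 using inU by blast
    obtain d2 dd2 where d2: "\<forall>\<sigma>. ((\<lambda>\<sigma>. g (gam s, rh (t + \<sigma>))) has_real_derivative d2 \<sigma>) (at \<sigma>)"
        "\<forall>\<sigma>. (d2 has_real_derivative dd2 \<sigma>) (at \<sigma>)"
      using curve_data[OF smg, of "(0, rh t)" "(0, Yt t)" "(gam s, 0)"] unfolding k2 using inU by blast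
    have "\<exists>k. k * (1 - dd1 0 + (d1 0)^2) > 0 \<and> - k * (1 + dd2 0 + (d2 0)^2) > 0"
    proof (rule key_point[OF sc ug ng(1,2,3) nr(1,2,3)])
      show "g (gam (s + \<sigma>), rh t) = g (cos \<sigma> *\<^sub>R gam s + sin \<sigma> *\<^sub>R Xs s, rh t)" for \<sigma>
        by (simp add: gshift)
      show "g (gam s, rh (t + \<sigma>)) = g (gam s, cos \<sigma> *\<^sub>R rh t + sin \<sigma> *\<^sub>R Yt t)" for \<sigma>
        by (simp add: rshift)
    qed (use d1 d2 in auto)
    then show ?thesis using d1 d2 by blast
  qed
  have kS: "Kc ((\<gamma>0, 0)::'a\<times>'b) (X0, 0) (0, rh 0) 0 \<sigma> = (gam \<sigma>, rh 0)" for \<sigma>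
    by (simp add: Kc0 gam_def)
  obtain DS DSS where DS: "\<And>\<sigma>. ((\<lambda>\<sigma>. g (gam \<sigma>, rh 0)) has_real_derivative DS \<sigma>) (at \<sigma>)"
      "\<And>\<sigma>. (DS has_real_derivative DSS \<sigma>) (at \<sigma>)" and cF1: "\<And>\<sigma>. isCont (\<lambda>\<sigma>. g (gam \<sigma>, rh 0)) \<sigma>"
    using curve_data[OF smg, of "(\<gamma>0, 0)" "(X0, 0)" "(0, rh 0)"] unfolding kS using inU by blast
  have per1: "g (gam (\<sigma> + 2*pi), rh 0) = g (gam \<sigma>, rh 0)" for \<sigma> by (simp add: gam_def)
  obtain s0 where mx: "\<forall>y. g (gam y, rh 0) \<le> g (gam s0, rh 0)"
    using periodic_global_max[where f="\<lambda>\<sigma>. g (gam \<sigma>, rh 0)", OF cF1 per1] by auto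
  have S0: "DS s0 = 0" "DSS s0 \<le> 0" using max_second[OF DS(1) DS(2) mx] by auto

  have kT: "Kc ((0, \<rho>0)::'a\<times>'b) (0, Y0) (gam s0, 0) 0 \<sigma> = (gam s0, rh \<sigma>)" for \<sigma>
    by (simp add: Kc0 rh_def)
  obtain DT DTT where DT: "\<And>\<sigma>. ((\<lambda>\<sigma>. g (gam s0, rh \<sigma>)) has_real_derivative DT \<sigma>) (at \<sigma>)"
      "\<And>\<sigma>. (DT has_real_derivative DTT \<sigma>) (at \<sigma>)" and cF2: "\<And>\<sigma>. isCont (\<lambda>\<sigma>. g (gam s0, rh \<sigma>)) \<sigma>"
      and cDT: "\<And>\<sigma>. isCont DT \<sigma>" and cDTT: "\<And>\<sigma>. isCont DTT \<sigma>"
    using curve_data[OF smg, of "(0, \<rho>0)" "(0, Y0)" "(gam s0, 0)"] unfolding kT using inU by blast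
  define h where "h \<tau> = 1 + DTT \<tau> + (DT \<tau>)^2" for \<tau>
  have ch: "isCont h \<tau>" for \<tau> unfolding h_def by (intro continuous_intros cDT cDTT)

  have rel2: "d2 0 = DT t \<and> dd2 0 = DTT t"
    if d2: "\<forall>\<sigma>. ((\<lambda>\<sigma>. g (gam s0, rh (t + \<sigma>))) has_real_derivative d2 \<sigma>) (at \<sigma>)"
      and dd2: "\<forall>\<sigma>. (d2 has_real_derivative dd2 \<sigma>) (at \<sigma>)" for t d2 dd2
  proof -
    have e: "d2 \<sigma> = DT (t + \<sigma>)" for \<sigma>
      using DERIV_unique[OF d2[rule_format] shift_deriv[OF DT(1)]] .
    then have "d2 = (\<lambda>\<sigma>. DT (t + \<sigma>))" by auto
    then have "(d2 has_real_derivative DTT t) (at 0)" using shift_deriv[of DT "DTT t" t 0] DT(2)[of t] by simp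
    then have "dd2 0 = DTT t" using DERIV_unique[OF dd2[rule_format, of 0]] by blast
    then show ?thesis using e[of 0] by simp
  qed
  have neg0: "h 0 < 0"
  proof -
    obtain d1 dd1 d2 dd2 k where
      d1: "\<forall>\<sigma>. ((\<lambda>\<sigma>. g (gam (s0 + \<sigma>), rh 0)) has_real_derivative d1 \<sigma>) (at \<sigma>)"
        "\<forall>\<sigma>. (d1 has_real_derivative dd1 \<sigma>) (at \<sigma>)" and
      d2: "\<forall>\<sigma>. ((\<lambda>\<sigma>. g (gam s0, rh (0 + \<sigma>))) has_real_derivative d2 \<sigma>) (at \<sigma>)"
        "\<forall>\<sigma>. (d2 has_real_derivative dd2 \<sigma>) (at \<sigma>)" and
      k: "k * (1 - dd1 0 + (d1 0)^2) > 0" "- k * (1 + dd2 0 + (d2 0)^2) > 0"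
      using PT[of s0 0] by blast
    have e: "d1 \<sigma> = DS (s0 + \<sigma>)" for \<sigma>
      using DERIV_unique[OF d1(1)[rule_format] shift_deriv[OF DS(1)]] .
    then have "d1 = (\<lambda>\<sigma>. DS (s0 + \<sigma>))" by auto
    then have "(d1 has_real_derivative DSS s0) (at 0)" using shift_deriv[of DS "DSS s0" s0 0] DS(2)[of s0] by simp
    then have "dd1 0 = DSS s0" using DERIV_unique[OF d1(2)[rule_format, of 0]] by blast
    then have pos: "1 - dd1 0 + (d1 0)^2 > 0" using e[of 0] S0 by simp
    have kp: "k > 0"
    proof (rule ccontr)
      assume "\<not> k > 0"
      then have "k * (1 - dd1 0 + (d1 0)^2) \<le> 0" using pos by (simp add: mult_nonpos_nonneg)
      then show False using k(1) by simp
    qed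
    have "1 + dd2 0 + (d2 0)^2 = h 0" using rel2[OF d2] by (simp add: h_def)
    then have "- k * h 0 > 0" using k(2) by simp
    then have "k * h 0 < 0" by simp
    then show ?thesis using kp by (simp add: mult_less_0_iff)
  qed
  have per2: "- g (gam s0, rh (\<sigma> + 2*pi)) = - g (gam s0, rh \<sigma>)" for \<sigma> by (simp add: rh_def)
  obtain t1 where mn: "\<forall>y. - g (gam s0, rh y) \<le> - g (gam s0, rh t1)"
    using periodic_global_max[where f="\<lambda>\<sigma>. - g (gam s0, rh \<sigma>)", OF _ per2] cF2 by (auto intro: continuous_intros)
  have "\<forall>y. g (gam s0, rh t1) \<le> g (gam s0, rh y)" using mn by simp
  then have T1: "DT t1 = 0" "DTT t1 \<ge> 0" using min_second[OF DT(1) DT(2)] by auto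
  have pos1: "h t1 > 0" using T1 by (simp add: h_def)
  obtain \<tau>0 where z: "h \<tau>0 = 0"
  proof (cases "0 \<le> t1")
    case True
    have "continuous_on {0..t1} h" using ch by (simp add: continuous_at_imp_continuous_on)
    then show ?thesis using IVT'[of h 0 0 t1] True neg0 pos1 that by force
  next
    case False
    have "continuous_on {t1..0} h" using ch by (simp add: continuous_at_imp_continuous_on)
    then show ?thesis using IVT2'[of h 0 0 t1] False neg0 pos1 that by force
  qed
  obtain d1 dd1 d2 dd2 k where
    d2: "\<forall>\<sigma>. ((\<lambda>\<sigma>. g (gam s0, rh (\<tau>0 + \<sigma>))) has_real_derivative d2 \<sigma>) (at \<sigma>)"
      "\<forall>\<sigma>. (d2 has_real_derivative dd2 \<sigma>) (at \<sigma>)" and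
    k: "- k * (1 + dd2 0 + (d2 0)^2) > 0"
    using PT[of s0 \<tau>0] by blast
  have "1 + dd2 0 + (d2 0)^2 = h \<tau>0" using rel2[OF d2] by (simp add: h_def)
  then show False using k z by simp
qed


theorem proposition2p1:
  fixes u :: "(real ^ 'm) \<times> (real ^ 'n) \<Rightarrow> real"
  assumes "CARD('m) \<ge> 2" and "CARD('n) \<ge> 2"
    and "smooth_on_set (sphere_prod :: ((real ^ 'm) \<times> (real ^ 'n)) set) u"
  shows "\<not> strictly_convex_hypersurface (sphere_prod :: ((real ^ 'm) \<times> (real ^ 'n)) set) (Xmap u)"
proof -
  have "\<exists>i j::'m. i \<noteq> j"
  proof (rule ccontr)
    assume "\<not> (\<exists>i j::'m. i \<noteq> j)"
    then have "CARD('m) \<le> Suc 0" by (subst card_le_Suc0_iff_eq) auto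
    with assms(1) show False by simp
  qed
  then obtain i j :: 'm where ij: "i \<noteq> j" by blast
  have "\<exists>i j::'n. i \<noteq> j"
  proof (rule ccontr)
    assume "\<not> (\<exists>i j::'n. i \<noteq> j)"
    then have "CARD('n) \<le> Suc 0" by (subst card_le_Suc0_iff_eq) auto
    with assms(2) show False by simp
  qed
  then obtain k l :: 'n where kl: "k \<noteq> l" by blast
  show ?thesis
    by (rule main_generic[of "axis i (1::real)" "axis j 1" "axis k (1::real)" "axis l 1"])
       (use ij kl assms(3) in \<open>simp_all add: inner_axis_axis\<close>)
qed

end
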